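(* Let $\bm{H}$ be a random matrix with values in $\mathbb{C}^{N_R\times N_T}$, let $\lambda_{\max}$ be the maximum eigenvalue of $\bm{H}\bm{H}^\ast$, let $p$ be a nonnegative random variable (random transmit power), let $a,b>0$ and $c=a\log_2(1+bp\lambda_{\max})$. Then: (1) The following are equivalent: $\overline{F}_c(x)=O(e^{-\theta x})$ for some $\theta>0$; $\overline{F}_{p\lambda_{\max}}(x)=O(x^{-\theta})$ for some $\theta>0$; $\overline{F}_{p\operatorname{Tr}[\bm{H}\bm{H}^\ast]}(x)=O(x^{-\theta})$ for some $\theta>0$. (2) The following are equivalent: $\mathbb{E}[(1+bp\lambda_{\max})^\theta]<\infty$ for some $\theta>0$ (i.e. $\mathbb{E}[e^{\theta' c}]<\infty$ for some $\theta'>0$); $\mathbb{E}[(1+p\lambda_{\max})^\theta]<\infty$ for some $\theta>0$; $\mathbb{E}[(p\lambda_{\max})^\theta]<\infty$ for some $\theta>0$. In addition, if $p$ and $\lambda_{\max}$ are independent, then $\mathbb{E}[(p\lambda_{\max})^\theta]=\mathbb{E}[p^\theta]\,\mathbb{E}[\lambda_{\max}^\theta]$, and in that case $\mathbb{E}[p]<\infty$ together with $\mathbb{E}[\lambda_{\max}]<\infty$ suffices for these conditions.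
   Context: $\overline{F}_Y(x)=\Pr(Y>x)$; $f(x)=O(g(x))$ means $\limsup_{x\to\infty}f(x)/g(x)<\infty$. In the paper, $c$ is an upper bound on the capacity of a flat MIMO channel with random transmit power. *)

theory Defs
  imports "HOL-Probability.Probability" "HOL-Library.Landau_Symbols"
begin

definition conj_transpose :: "complex^'n^'m \<Rightarrow> complex^'m^'n" where
  "conj_transpose A = (\<chi> i j. cnj (A $ j $ i))"

definition mat_trace :: "complex^'n^'n \<Rightarrow> complex" where
  "mat_trace A = (\<Sum>i\<in>UNIV. A $ i $ i)"

definition real_eigenvalues :: "complex^'n^'n \<Rightarrow> real set" where
  "real_eigenvalues A = {x. \<exists>v. v \<noteq> 0 \<and> A *v v = complex_of_real x *s v}"

text \<open>Maximum eigenvalue of H H^* (which is Hermitian, so all eigenvalues are real).\<close>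
definition lambda_max :: "complex^'nt^'nr \<Rightarrow> real" where
  "lambda_max H = Max (real_eigenvalues (H ** conj_transpose H))"

definition tail :: "'a measure \<Rightarrow> ('a \<Rightarrow> real) \<Rightarrow> real \<Rightarrow> real" where
  "tail M Y x = measure M {\<omega> \<in> space M. Y \<omega> > x}"

end

theory Submission
  imports Defs "HOL-Real_Asymp.Real_Asymp"
begin


lemma inner_complex_cnj: "inner (z::complex) w = Re (cnj z * w)"
  by (simp add: inner_complex_def)

lemma inner_cvec: "inner (x::complex^'n) y = Re (\<Sum>i\<in>UNIV. cnj (x$i) * y$i)"
  by (simp add: inner_vec_def inner_complex_cnj Re_sum)

lemma adj_inner:
  fixes H :: "complex^'n^'m" and x :: "complex^'m" and y :: "complex^'n"
  shows "inner (conj_transpose H *v x) y = inner x (H *v y)"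
proof -
  have "(\<Sum>j\<in>UNIV. cnj ((conj_transpose H *v x)$j) * y$j)
      = (\<Sum>j\<in>UNIV. \<Sum>i\<in>UNIV. H$i$j * cnj (x$i) * y$j)"
    by (simp add: matrix_vector_mult_def conj_transpose_def sum_distrib_right sum_distrib_left mult.commute mult.left_commute)
  also have "\<dots> = (\<Sum>i\<in>UNIV. \<Sum>j\<in>UNIV. H$i$j * cnj (x$i) * y$j)"
    by (rule sum.swap)
  also have "\<dots> = (\<Sum>i\<in>UNIV. cnj (x$i) * (H *v y)$i)"
    by (simp add: matrix_vector_mult_def sum_distrib_left mult.commute mult.left_commute)
  finally show ?thesis by (simp add: inner_cvec)
qed

lemma scale_real: "(complex_of_real x *s (v::complex^'n)) = x *\<^sub>R v"
  by (simp add: vec_eq_iff) (simp add: scaleR_conv_of_real)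

lemma quad_form:
  fixes H :: "complex^'n^'m" and v :: "complex^'m"
  shows "inner v ((H ** conj_transpose H) *v v) = (norm (conj_transpose H *v v))^2"
  by (simp add: matrix_vector_mul_assoc[symmetric] adj_inner[symmetric] power2_norm_eq_inner)

lemma trace_norm:
  fixes H :: "complex^'n^'m"
  shows "Re (mat_trace (H ** conj_transpose H)) = (norm H)^2"
proof -
  have "Re (mat_trace (H ** conj_transpose H)) = (\<Sum>i\<in>UNIV. \<Sum>k\<in>UNIV. (norm (H$i$k))^2)"
    by (simp add: mat_trace_def matrix_matrix_mult_def conj_transpose_def Re_sum complex_mult_cnj
        flip: complex_norm_square cong: sum.cong)
      (simp add: cmod_power2)
  also have "\<dots> = (norm H)^2"
    by (simp add: norm_vec_def L2_set_def sum_nonneg)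
  finally show ?thesis .
qed

lemma Hs_axis:
  fixes H :: "complex^'n^'m"
  shows "norm (conj_transpose H *v axis i 1) = norm (H$i)"
proof -
  have "conj_transpose H *v axis i 1 = (\<chi> j. cnj (H$i$j))"
    by (simp add: vec_eq_iff matrix_vector_mult_def conj_transpose_def axis_def if_distrib
        cong: if_cong)
  then show ?thesis by (simp add: norm_vec_def)
qed

lemma mv_scaleR: "(A::complex^'n^'m) *v (c *\<^sub>R x) = c *\<^sub>R (A *v x)"
  unfolding vec_eq_iff by (simp add: matrix_vector_mult_def scaleR_sum_right)

lemma real_quad_zero:
  fixes d K :: real
  assumes "\<And>t. 2 * t * d \<le> t^2 * K"
  shows "d = 0"
proof -
  define L where "L = \<bar>K\<bar> + 1"
  have L: "L > 0" "K \<le> L - 1" by (auto simp: L_def)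
  have 1: "2 * (d / L) * d \<le> (d/L)^2 * K" using assms by blast
  have 2: "2 * (-d / L) * d \<le> (-d/L)^2 * K" using assms by blast
  have "(d/L)^2 * K \<le> (d/L)^2 * (L - 1)" using L by (intro mult_left_mono) auto
  with 1 have "2 * d^2 / L \<le> d^2/L - d^2/L^2"
    using L by (simp add: power2_eq_square field_simps)
  then have "d^2 / L + d^2/L^2 \<le> 0" by simp
  moreover have "d^2/L \<ge> 0" "d^2/L^2 \<ge> 0" using L by auto
  ultimately have "d^2 / L = 0" by linarith
  then show ?thesis using L by simp
qed

lemma lam_char:
  fixes H :: "complex^'n^'m"
  shows "\<exists>v0. norm v0 = 1 \<and> lambda_max H = (norm (conj_transpose H *v v0))^2
    \<and> (\<forall>v. (norm (conj_transpose H *v v))^2 \<le> lambda_max H * (norm v)^2)"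
proof -
  define Hs where "Hs = conj_transpose H"
  define A where "A = H ** Hs"
  define F where "F = (\<lambda>v. (norm (Hs *v v))^2)"
  have contF: "continuous_on UNIV F"
    unfolding F_def matrix_vector_mult_def by (intro continuous_intros)
  have "\<exists>x\<in>sphere (0::complex^'m) 1. \<forall>y\<in>sphere 0 1. F y \<le> F x"
    by (rule continuous_attains_sup) (auto intro: continuous_on_subset[OF contF])
  then obtain v0 :: "complex^'m" where v0: "norm v0 = 1" and mx: "\<And>y. norm y = 1 \<Longrightarrow> F y \<le> F v0"
    by auto
  define mu where "mu = F v0"
  have bound: "F v \<le> mu * (norm v)^2" for v
  proof (cases "v = 0")
    case True then show ?thesis by (simp add: F_def)
  next
    case False
    then have "F ((1/norm v) *\<^sub>R v) \<le> mu" using mx unfolding mu_def by simp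
    then show ?thesis using False
      by (simp add: F_def mv_scaleR power_divide field_simps)
  qed
  have symA: "inner (A *v x) y = inner x (A *v y)" for x y
    unfolding A_def Hs_def
    by (metis adj_inner inner_commute matrix_vector_mul_assoc)
  have innF: "inner x (A *v x) = F x" for x
    unfolding A_def F_def Hs_def by (rule quad_form)
  have eig: "A *v v0 = mu *\<^sub>R v0"
  proof -
    have key: "inner (A *v v0 - mu *\<^sub>R v0) u = 0" for u
    proof -
      define d where "d = inner (A *v v0 - mu *\<^sub>R v0) u"
      have "2 * t * d \<le> t^2 * (mu * (norm u)^2)" for t
      proof -
        have b: "F (v0 + t *\<^sub>R u) \<le> mu * (norm (v0 + t *\<^sub>R u))^2" by (rule bound)
        have e1: "F (v0 + t *\<^sub>R u) = inner (v0 + t *\<^sub>R u) (A *v (v0 + t *\<^sub>R u))"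
          by (simp add: innF)
        also have "\<dots> = inner v0 (A *v v0) + t * inner v0 (A *v u) + t * inner u (A *v v0) + t^2 * inner u (A *v u)"
          by (simp add: matrix_vector_right_distrib mv_scaleR inner_add_left inner_add_right power2_eq_square algebra_simps)
        also have "\<dots> = F v0 + 2 * t * inner (A *v v0) u + t^2 * F u"
          unfolding innF symA[of v0 u, symmetric] inner_commute[of u "A *v v0"] by simp
        finally have e1': "F (v0 + t *\<^sub>R u) = F v0 + 2 * t * inner (A *v v0) u + t^2 * F u" .
        have n1: "inner v0 v0 = 1" by (metis v0 power2_norm_eq_inner power_one)
        have e2: "(norm (v0 + t *\<^sub>R u))^2 = 1 + 2 * t * inner v0 u + t^2 * inner u u"
          unfolding power2_norm_eq_inner
          by (simp add: inner_add_left inner_add_right inner_commute[of u v0] n1 power2_eq_square algebra_simps)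
        have Fu: "t^2 * F u \<ge> 0" by (simp add: F_def)
        have i1: "F v0 + 2 * t * inner (A *v v0) u + t^2 * F u \<le> mu * (1 + 2 * t * inner v0 u + t^2 * inner u u)"
          using b e1' e2 by simp
        have i2: "mu * (1 + 2 * t * inner v0 u + t^2 * inner u u) = mu + 2 * t * (mu * inner v0 u) + t^2 * (mu * inner u u)"
          by (simp add: algebra_simps)
        have i3: "2 * t * d = 2 * t * inner (A *v v0) u - 2 * t * (mu * inner v0 u)"
          unfolding d_def by (simp add: inner_diff_left algebra_simps)
        show ?thesis using i1 i2 i3 Fu unfolding mu_def power2_norm_eq_inner by linarith
      qed
      then show ?thesis unfolding d_def by (rule real_quad_zero)
    qed
    have "inner (A *v v0 - mu *\<^sub>R v0) (A *v v0 - mu *\<^sub>R v0) = 0" by (rule key)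
    then show ?thesis by simp
  qed
  have eigval: "0 \<le> x \<and> x \<le> mu" if xin: "x \<in> real_eigenvalues A" for x
  proof -
    obtain v where v: "v \<noteq> 0" "A *v v = x *\<^sub>R v"
      using xin by (auto simp: real_eigenvalues_def scale_real)
    have "F v = x * (norm v)^2"
      using innF[of v] v by (simp add: power2_norm_eq_inner)
    have n: "norm v ^2 > 0" using v by simp
    have "F v \<ge> 0" by (simp add: F_def)
    then have "x * (norm v)^2 \<ge> 0" using \<open>F v = x * (norm v)^2\<close> by linarith
    then have "x \<ge> 0" using n by (simp add: zero_le_mult_iff)
    moreover have "x * (norm v)^2 \<le> mu * (norm v)^2" using \<open>F v = x * (norm v)^2\<close> bound[of v] by simp
    then have "x \<le> mu" using n by simp
    ultimately show ?thesis by simp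
  qed
  have v0nz: "v0 \<noteq> 0" using v0 by auto
  have mu_in: "mu \<in> real_eigenvalues A"
    unfolding real_eigenvalues_def mem_Collect_eq scale_real using eig v0nz by blast
  have fin: "finite (real_eigenvalues A)"
  proof -
    define E where "E = real_eigenvalues A"
    define ev where "ev = (\<lambda>x. SOME v. v \<noteq> 0 \<and> A *v v = x *\<^sub>R v)"
    have ev: "ev x \<noteq> 0 \<and> A *v ev x = x *\<^sub>R ev x" if xin: "x \<in> E" for x
    proof -
      have "\<exists>v. v \<noteq> 0 \<and> A *v v = x *\<^sub>R v"
        using xin unfolding E_def real_eigenvalues_def mem_Collect_eq scale_real .
      then show ?thesis unfolding ev_def by (rule someI_ex)
    qed
    have orth: "inner (ev x) (ev y) = 0" if xy: "x \<in> E" "y \<in> E" "x \<noteq> y" for x y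
    proof -
      have "inner (A *v ev x) (ev y) = inner (ev x) (A *v ev y)" by (rule symA)
      then have "x * inner (ev x) (ev y) = y * inner (ev x) (ev y)"
        using ev[OF xy(1)] ev[OF xy(2)] by simp
      then show ?thesis using xy(3) by simp
    qed
    have inj: "inj_on ev E"
    proof (rule inj_onI)
      fix x y assume xy: "x \<in> E" "y \<in> E" and exy: "ev x = ev y"
      show "x = y"
      proof (rule ccontr)
        assume "x \<noteq> y"
        then have "inner (ev x) (ev y) = 0" using orth xy by blast
        then have "inner (ev x) (ev x) = 0" using exy by simp
        then show False using ev[OF xy(1)] by simp
      qed
    qed
    have "pairwise orthogonal (ev ` E)"
      unfolding pairwise_def orthogonal_def
    proof (intro ballI impI)
      fix a b assume ab: "a \<in> ev ` E" "b \<in> ev ` E" "a \<noteq> b"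
      then obtain x y where "x \<in> E" "y \<in> E" "a = ev x" "b = ev y" by blast
      moreover have "x \<noteq> y" using ab(3) calculation(3,4) by auto
      ultimately show "inner a b = 0" using orth by blast
    qed
    moreover have "0 \<notin> ev ` E" using ev by force
    ultimately have "independent (ev ` E)"
      by (rule pairwise_orthogonal_independent)
    then have "finite (ev ` E)" by (rule independent_imp_finite)
    then show ?thesis using inj unfolding E_def by (rule finite_imageD)
  qed
  have lm: "lambda_max H = mu"
    unfolding lambda_max_def Hs_def[symmetric] A_def[symmetric]
    by (rule Max_eqI[OF fin]) (use eigval mu_in in auto)
  show ?thesis
  proof (intro exI[of _ v0] conjI allI)
    show "norm v0 = 1" by (rule v0)
    show "lambda_max H = (norm (conj_transpose H *v v0))^2" using lm unfolding mu_def F_def Hs_def .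
    fix v show "(norm (conj_transpose H *v v))^2 \<le> lambda_max H * (norm v)^2"
      using bound[of v] lm unfolding F_def Hs_def by simp
  qed
qed

lemma norm_axis_c: "norm (axis i (1::complex) :: complex^'m) = 1"
proof -
  have "norm (axis i (1::complex) :: complex^'m) = sqrt (\<Sum>j\<in>UNIV. (norm (axis i (1::complex) $ j))^2)"
    by (simp add: norm_vec_def L2_set_def)
  also have "(\<Sum>j\<in>UNIV. (norm (axis i (1::complex) $ j))^2) = (\<Sum>j\<in>UNIV. if j = i then 1 else 0)"
    by (intro sum.cong) (auto simp: axis_def)
  also have "\<dots> = 1" by simp
  finally show ?thesis by simp
qed

lemma norm_sq_vec: "(norm (x::'a::real_normed_vector^'n))^2 = (\<Sum>i\<in>UNIV. (norm (x$i))^2)"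
  by (simp add: norm_vec_def L2_set_def sum_nonneg)

lemma norm_le_sum_vec: "norm (x::'a::real_normed_vector^'n) \<le> (\<Sum>i\<in>UNIV. norm (x$i))"
  unfolding norm_vec_def by (rule L2_set_le_sum) simp

lemma lam_nonneg: "0 \<le> lambda_max (H::complex^'n^'m)"
  using lam_char[of H] by auto

lemma trace_le_lam:
  fixes H :: "complex^'n^'m"
  shows "(norm H)^2 \<le> real CARD('m) * lambda_max H"
proof -
  obtain v0 where "\<forall>v. (norm (conj_transpose H *v v))^2 \<le> lambda_max H * (norm v)^2"
    using lam_char[of H] by blast
  moreover have "norm (axis i (1::complex) :: complex^'m) = 1" for i by (rule norm_axis_c)
  ultimately have "(norm (H$i))^2 \<le> lambda_max H" for i
    by (metis Hs_axis mult.right_neutral power_one)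
  then have "(\<Sum>i\<in>UNIV. (norm (H$i))^2) \<le> (\<Sum>i\<in>(UNIV::'m set). lambda_max H)"
    by (intro sum_mono) auto
  then show ?thesis by (simp add: norm_sq_vec)
qed

lemma norm_Hs_bound:
  fixes H :: "complex^'n^'m"
  shows "norm (conj_transpose H *v v) \<le> real CARD('n) * real CARD('m) * norm H * norm v"
proof -
  have c: "norm ((conj_transpose H *v v) $ j) \<le> real CARD('m) * (norm H * norm v)" for j
  proof -
    have "norm ((conj_transpose H *v v) $ j) = norm (\<Sum>i\<in>UNIV. cnj (H$i$j) * v$i)"
      by (simp add: matrix_vector_mult_def conj_transpose_def)
    also have "\<dots> \<le> (\<Sum>i\<in>UNIV. norm (cnj (H$i$j) * v$i))" by (rule norm_sum)
    also have "\<dots> \<le> (\<Sum>i\<in>(UNIV::'m set). norm H * norm v)"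
    proof (intro sum_mono)
      fix i
      have "norm (H$i$j) \<le> norm H" using Finite_Cartesian_Product.norm_nth_le[where x="H$i" and i=j] Finite_Cartesian_Product.norm_nth_le[where x=H and i=i] by linarith
      then show "norm (cnj (H$i$j) * v$i) \<le> norm H * norm v"
        by (simp add: norm_mult mult_mono Finite_Cartesian_Product.norm_nth_le)
    qed
    finally show ?thesis by simp
  qed
  have "norm (conj_transpose H *v v) \<le> (\<Sum>j\<in>UNIV. norm ((conj_transpose H *v v) $ j))"
    by (rule norm_le_sum_vec)
  also have "\<dots> \<le> (\<Sum>j\<in>(UNIV::'n set). real CARD('m) * (norm H * norm v))"
    by (intro sum_mono c)
  finally show ?thesis by (simp add: mult.assoc)
qed

lemma lam_le_trace:
  fixes H :: "complex^'n^'m"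
  shows "lambda_max H \<le> (real CARD('n) * real CARD('m))^2 * (norm H)^2"
proof -
  obtain v0 where v0: "norm v0 = 1" "lambda_max H = (norm (conj_transpose H *v v0))^2"
    using lam_char[of H] by blast
  have "norm (conj_transpose H *v v0) \<le> real CARD('n) * real CARD('m) * norm H"
    using norm_Hs_bound[of H v0] v0 by simp
  then have "(norm (conj_transpose H *v v0))^2 \<le> (real CARD('n) * real CARD('m) * norm H)^2"
    by (intro power_mono) auto
  then show ?thesis using v0 by (simp add: power_mult_distrib)
qed

lemma lam_le_iff:
  fixes H :: "complex^'n^'m"
  shows "lambda_max H \<le> y \<longleftrightarrow> (\<forall>v. (norm (conj_transpose H *v v))^2 \<le> y * (norm v)^2)"
proof
  assume "lambda_max H \<le> y"
  then show "\<forall>v. (norm (conj_transpose H *v v))^2 \<le> y * (norm v)^2"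
    using lam_char[of H] by (meson dual_order.trans mult_right_mono zero_le_power2)
next
  assume "\<forall>v. (norm (conj_transpose H *v v))^2 \<le> y * (norm v)^2"
  then show "lambda_max H \<le> y" using lam_char[of H] by (metis mult.right_neutral power_one)
qed

lemma lam_borel: "lambda_max \<in> borel_measurable (borel :: (complex^'n^'m) measure)"
proof -
  have "closed {H::complex^'n^'m. lambda_max H \<le> y}" for y
  proof -
    have "{H::complex^'n^'m. lambda_max H \<le> y}
        = {H. \<forall>v. (norm (conj_transpose H *v v))^2 \<le> y * (norm v)^2}"
      by (simp add: lam_le_iff)
    also have "closed \<dots>"
      unfolding conj_transpose_def matrix_vector_mult_def
      by (intro closed_Collect_all closed_Collect_le continuous_intros)
    finally show ?thesis .
  qed
  then show ?thesis
    unfolding borel_measurable_iff_le by (simp add: borel_closed)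
qed




lemma exp_log_powr:
  fixes z t a :: real assumes "0 < z"
  shows "exp (t * (a * log 2 z)) = z powr (t * a / ln 2)"
  using assms by (simp add: powr_def log_def field_simps)

lemma powr_bound:
  fixes u v B th :: real
  assumes "0 \<le> u" "0 \<le> B" "u \<le> B * v" "0 < th"
  shows "u powr th \<le> B powr th * v powr th"
proof -
  have "u powr th \<le> (B * v) powr th" using assms by (intro powr_mono2) auto
  then show ?thesis by (simp add: powr_mult)
qed

context prob_space
begin

lemma tail_nonneg: "0 \<le> tail M Y x" by (simp add: tail_def)

lemma tail_mono_AE:
  assumes U: "U \<in> borel_measurable M" and V: "V \<in> borel_measurable M"
    and imp: "AE \<omega> in M. U \<omega> > x \<longrightarrow> V \<omega> > y"
  shows "tail M U x \<le> tail M V y"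
proof -
  note U[measurable] V[measurable]
  have "AE \<omega> in M. \<omega> \<in> {\<omega>\<in>space M. U \<omega> > x} \<longrightarrow> \<omega> \<in> {\<omega>\<in>space M. V \<omega> > y}"
    using imp by eventually_elim auto
  moreover have "{\<omega>\<in>space M. V \<omega> > y} \<in> sets M" by measurable
  ultimately have "emeasure M {\<omega>\<in>space M. U \<omega> > x} \<le> emeasure M {\<omega>\<in>space M. V \<omega> > y}"
    by (rule emeasure_mono_AE)
  then show ?thesis by (simp add: tail_def emeasure_eq_measure)
qed

lemma tail_eq_AE:
  assumes U: "U \<in> borel_measurable M" and V: "V \<in> borel_measurable M"
    and imp: "AE \<omega> in M. U \<omega> > x \<longleftrightarrow> V \<omega> > y"
  shows "tail M U x = tail M V y"
proof (rule antisym)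
  show "tail M U x \<le> tail M V y" by (rule tail_mono_AE[OF U V]) (use imp in eventually_elim, auto)
  show "tail M V y \<le> tail M U x" by (rule tail_mono_AE[OF V U]) (use imp in eventually_elim, auto)
qed

lemma poly_tail_transfer:
  assumes U: "U \<in> borel_measurable M" and V: "V \<in> borel_measurable M"
    and k: "k > 0" and le: "AE \<omega> in M. U \<omega> \<le> k * V \<omega>" and th: "th > 0"
    and O: "tail M V \<in> O(\<lambda>x. x powr (- th))"
  shows "tail M U \<in> O(\<lambda>x. x powr (- th))"
proof -
  have 1: "tail M U \<in> O(\<lambda>x. tail M V (x/k))"
  proof (rule landau_o.big_mono, rule always_eventually, intro allI)
    fix x
    have "tail M U x \<le> tail M V (x/k)"
    proof (rule tail_mono_AE[OF U V])
      show "AE \<omega> in M. x < U \<omega> \<longrightarrow> x / k < V \<omega>"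
        using le by eventually_elim (use k in \<open>auto simp: pos_divide_less_eq mult.commute\<close>)
    qed
    then show "norm (tail M U x) \<le> norm (tail M V (x/k))" using tail_nonneg[of U x] by simp
  qed
  have 2: "(\<lambda>x. tail M V (x/k)) \<in> O(\<lambda>x. (x/k) powr (-th))"
    by (rule landau_o.big.compose[OF O]) (use k in real_asymp)
  have 3: "(\<lambda>x. (x/k) powr (-th)) \<in> O(\<lambda>x. x powr (-th))"
    using k th by real_asymp
  show ?thesis by (rule landau_o.big_trans[OF landau_o.big_trans[OF 1 2] 3])
qed

lemma part1:
  fixes X T :: "'a \<Rightarrow> real" and a b k1 k2 :: real
  assumes X: "X \<in> borel_measurable M" and X0: "AE \<omega> in M. 0 \<le> X \<omega>"
    and a: "a > 0" and b: "b > 0"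
    and T: "T \<in> borel_measurable M" and k1: "k1 > 0" and k2: "k2 > 0"
    and le1: "AE \<omega> in M. X \<omega> \<le> k1 * T \<omega>" and le2: "AE \<omega> in M. T \<omega> \<le> k2 * X \<omega>"
  shows "((\<exists>\<theta>>0. tail M (\<lambda>\<omega>. a * log 2 (1 + b * X \<omega>)) \<in> O(\<lambda>x. exp (- \<theta> * x)))
        \<longleftrightarrow> (\<exists>\<theta>>0. tail M X \<in> O(\<lambda>x. x powr (- \<theta>))))
     \<and> ((\<exists>\<theta>>0. tail M X \<in> O(\<lambda>x. x powr (- \<theta>)))
        \<longleftrightarrow> (\<exists>\<theta>>0. tail M T \<in> O(\<lambda>x. x powr (- \<theta>))))"
proof -
  define c where "c = (\<lambda>\<omega>. a * log 2 (1 + b * X \<omega>))"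
  note X[measurable] T[measurable]
  have c_meas: "c \<in> borel_measurable M" unfolding c_def by measurable
  have tc: "tail M c x = tail M X ((2 powr (x/a) - 1)/b)" for x
  proof (rule tail_eq_AE[OF c_meas X])
    show "AE \<omega> in M. x < c \<omega> \<longleftrightarrow> (2 powr (x/a) - 1)/b < X \<omega>"
      using X0
    proof eventually_elim
      case (elim \<omega>)
      have pos: "0 < 1 + b * X \<omega>" using elim b by (simp add: add_pos_nonneg)
      have "x < c \<omega> \<longleftrightarrow> x / a < log 2 (1 + b * X \<omega>)"
        unfolding c_def using a by (simp add: pos_divide_less_eq mult.commute)
      also have "\<dots> \<longleftrightarrow> 2 powr (x/a) < 1 + b * X \<omega>"
        using pos by (simp add: less_log_iff)
      also have "\<dots> \<longleftrightarrow> (2 powr (x/a) - 1)/b < X \<omega>"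
        using b by (auto simp: pos_divide_less_eq mult.commute)
      finally show ?case .
    qed
  qed
  have tX: "tail M X y = tail M c (a * log 2 (1 + b * y))" if y: "y \<ge> 0" for y
  proof (rule tail_eq_AE[OF X c_meas])
    show "AE \<omega> in M. y < X \<omega> \<longleftrightarrow> a * log 2 (1 + b * y) < c \<omega>"
      using X0
    proof eventually_elim
      case (elim \<omega>)
      have pos: "0 < 1 + b * X \<omega>" using elim b by (simp add: add_pos_nonneg)
      have pos2: "0 < 1 + b * y" using y b by (simp add: add_pos_nonneg)
      have "a * log 2 (1 + b * y) < c \<omega> \<longleftrightarrow> log 2 (1 + b * y) < log 2 (1 + b * X \<omega>)"
        unfolding c_def using a by simp
      also have "\<dots> \<longleftrightarrow> 1 + b * y < 1 + b * X \<omega>" using pos pos2 by simp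
      also have "\<dots> \<longleftrightarrow> y < X \<omega>" using b by simp
      finally show ?case by simp
    qed
  qed
  have A: "(\<exists>\<theta>>0. tail M c \<in> O(\<lambda>x. exp (- \<theta> * x))) \<longleftrightarrow> (\<exists>\<theta>>0. tail M X \<in> O(\<lambda>x. x powr (- \<theta>)))"
  proof
    assume "\<exists>\<theta>>0. tail M c \<in> O(\<lambda>x. exp (- \<theta> * x))"
    then obtain th where th: "th > 0" and O: "tail M c \<in> O(\<lambda>x. exp (- th * x))" by blast
    define e where "e = th * a / ln 2"
    have e: "e > 0" unfolding e_def using th a by simp
    have 1: "(\<lambda>y. tail M c (a * log 2 (1 + b * y))) \<in> O(\<lambda>y. exp (- th * (a * log 2 (1 + b * y))))"
      by (rule landau_o.big.compose[OF O]) (use a b in real_asymp)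
    have ev: "eventually (\<lambda>y. tail M c (a * log 2 (1 + b * y)) = tail M X y) at_top"
      using eventually_ge_at_top[of 0] by eventually_elim (simp add: tX)
    have 2: "tail M X \<in> O(\<lambda>y. exp (- th * (a * log 2 (1 + b * y))))"
      using 1 landau_o.big.in_cong[OF ev] by simp
    have ev2: "eventually (\<lambda>y. (1 + b * y) powr (- e) = exp (- th * (a * log 2 (1 + b * y)))) at_top"
      using eventually_ge_at_top[of 0]
    proof eventually_elim
      case (elim y)
      then have "0 < 1 + b * y" using b by (simp add: add_pos_nonneg)
      then have "exp (- th * (a * log 2 (1 + b * y))) = (1 + b*y) powr (- th * a / ln 2)"
        by (rule exp_log_powr)
      then show ?case by (simp add: e_def)
    qed
    have 3: "(\<lambda>y. (1 + b * y) powr (- e)) \<in> O(\<lambda>y. y powr (- e))"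
      using b e by real_asymp
    have 4: "(\<lambda>y. exp (- th * (a * log 2 (1 + b * y)))) \<in> O(\<lambda>y. y powr (- e))"
      using 3 landau_o.big.in_cong[OF ev2] by simp
    show "\<exists>\<theta>>0. tail M X \<in> O(\<lambda>x. x powr (- \<theta>))"
      using landau_o.big_trans[OF 2 4] e by blast
  next
    assume "\<exists>\<theta>>0. tail M X \<in> O(\<lambda>x. x powr (- \<theta>))"
    then obtain th where th: "th > 0" and O: "tail M X \<in> O(\<lambda>x. x powr (- th))" by blast
    have 1: "(\<lambda>x. tail M X ((2 powr (x/a) - 1)/b)) \<in> O(\<lambda>x. ((2 powr (x/a) - 1)/b) powr (- th))"
      by (rule landau_o.big.compose[OF O]) (use a b in real_asymp)
    have 2: "(\<lambda>x. ((2 powr (x/a) - 1)/b) powr (-th)) \<in> O(\<lambda>x. exp (- (th * ln 2 / a) * x))"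
      using a b th by real_asymp
    have tcf: "tail M c = (\<lambda>x. tail M X ((2 powr (x/a) - 1)/b))" by (rule ext) (rule tc)
    have "tail M c \<in> O(\<lambda>x. exp (- (th * ln 2 / a) * x))"
      unfolding tcf by (rule landau_o.big_trans[OF 1 2])
    moreover have "th * ln 2 / a > 0" using th a by simp
    ultimately show "\<exists>\<theta>>0. tail M c \<in> O(\<lambda>x. exp (- \<theta> * x))" by blast
  qed
  have B: "(\<exists>\<theta>>0. tail M X \<in> O(\<lambda>x. x powr (- \<theta>))) \<longleftrightarrow> (\<exists>\<theta>>0. tail M T \<in> O(\<lambda>x. x powr (- \<theta>)))"
    using poly_tail_transfer[OF X T k1 le1] poly_tail_transfer[OF T X k2 le2] by blast
  show ?thesis using A B unfolding c_def by blast
qed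


lemma part2:
  fixes X :: "'a \<Rightarrow> real" and a b :: real
  assumes X: "X \<in> borel_measurable M" and X0: "AE \<omega> in M. 0 \<le> X \<omega>"
    and a: "a > 0" and b: "b > 0"
  shows "((\<exists>\<theta>>0. integrable M (\<lambda>\<omega>. (1 + b * X \<omega>) powr \<theta>))
          \<longleftrightarrow> (\<exists>\<theta>>0. integrable M (\<lambda>\<omega>. exp (\<theta> * (a * log 2 (1 + b * X \<omega>))))))
     \<and> ((\<exists>\<theta>>0. integrable M (\<lambda>\<omega>. (1 + b * X \<omega>) powr \<theta>))
          \<longleftrightarrow> (\<exists>\<theta>>0. integrable M (\<lambda>\<omega>. (1 + X \<omega>) powr \<theta>)))
     \<and> ((\<exists>\<theta>>0. integrable M (\<lambda>\<omega>. (1 + X \<omega>) powr \<theta>))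
          \<longleftrightarrow> (\<exists>\<theta>>0. integrable M (\<lambda>\<omega>. X \<omega> powr \<theta>)))"
proof -
  note X[measurable]
  have expeq: "integrable M (\<lambda>\<omega>. exp (t * (a * log 2 (1 + b * X \<omega>))))
      \<longleftrightarrow> integrable M (\<lambda>\<omega>. (1 + b * X \<omega>) powr (t * a / ln 2))" for t
  proof (rule integrable_cong_AE)
    show "AE \<omega> in M. exp (t * (a * log 2 (1 + b * X \<omega>))) = (1 + b * X \<omega>) powr (t * a / ln 2)"
      using X0
    proof eventually_elim
      case (elim \<omega>)
      then have "0 < 1 + b * X \<omega>" using b by (simp add: add_pos_nonneg)
      then show ?case by (rule exp_log_powr)
    qed
  qed measurable
  have A: "(\<exists>\<theta>>0. integrable M (\<lambda>\<omega>. (1 + b * X \<omega>) powr \<theta>))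
          \<longleftrightarrow> (\<exists>\<theta>>0. integrable M (\<lambda>\<omega>. exp (\<theta> * (a * log 2 (1 + b * X \<omega>)))))"
  proof
    assume "\<exists>\<theta>>0. integrable M (\<lambda>\<omega>. (1 + b * X \<omega>) powr \<theta>)"
    then obtain th where th: "th > 0" and I: "integrable M (\<lambda>\<omega>. (1 + b * X \<omega>) powr th)" by blast
    have "th * ln 2 / a * a / ln 2 = th" using a by simp
    then have "integrable M (\<lambda>\<omega>. exp ((th * ln 2 / a) * (a * log 2 (1 + b * X \<omega>))))"
      using I expeq[of "th * ln 2 / a"] by simp
    moreover have "th * ln 2 / a > 0" using th a by simp
    ultimately show "\<exists>\<theta>>0. integrable M (\<lambda>\<omega>. exp (\<theta> * (a * log 2 (1 + b * X \<omega>))))" by blast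
  next
    assume "\<exists>\<theta>>0. integrable M (\<lambda>\<omega>. exp (\<theta> * (a * log 2 (1 + b * X \<omega>))))"
    then obtain t where t: "t > 0" and I: "integrable M (\<lambda>\<omega>. exp (t * (a * log 2 (1 + b * X \<omega>))))" by blast
    have "integrable M (\<lambda>\<omega>. (1 + b * X \<omega>) powr (t * a / ln 2))" using I expeq by simp
    moreover have "t * a / ln 2 > 0" using t a by simp
    ultimately show "\<exists>\<theta>>0. integrable M (\<lambda>\<omega>. (1 + b * X \<omega>) powr \<theta>)" by blast
  qed
  have dom: "integrable M g"
    if I: "integrable M f" and g: "g \<in> borel_measurable M" and B: "B \<ge> 0"
      and le: "AE \<omega> in M. 0 \<le> g \<omega> \<and> g \<omega> \<le> B * f \<omega>" for f g :: "'a \<Rightarrow> real" and B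
  proof (rule Bochner_Integration.integrable_bound[OF _ g])
    show "integrable M (\<lambda>\<omega>. B * f \<omega>)" using I by simp
    show "AE \<omega> in M. norm (g \<omega>) \<le> norm (B * f \<omega>)" using le by eventually_elim auto
  qed
  have Bb: "(\<exists>\<theta>>0. integrable M (\<lambda>\<omega>. (1 + b * X \<omega>) powr \<theta>))
          \<longleftrightarrow> (\<exists>\<theta>>0. integrable M (\<lambda>\<omega>. (1 + X \<omega>) powr \<theta>))"
  proof
    assume "\<exists>\<theta>>0. integrable M (\<lambda>\<omega>. (1 + b * X \<omega>) powr \<theta>)"
    then obtain th where th: "th > 0" and I: "integrable M (\<lambda>\<omega>. (1 + b * X \<omega>) powr th)" by blast
    define B where "B = max 1 (1/b)"
    have gm: "(\<lambda>\<omega>. (1 + X \<omega>) powr th) \<in> borel_measurable M" by measurable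
    have "integrable M (\<lambda>\<omega>. (1 + X \<omega>) powr th)"
    proof (rule dom[OF I gm])
      show "AE \<omega> in M. 0 \<le> (1 + X \<omega>) powr th \<and> (1 + X \<omega>) powr th \<le> B powr th * (1 + b * X \<omega>) powr th"
        using X0
      proof eventually_elim
        case (elim \<omega>)
        have "1 + X \<omega> \<le> B * (1 + b * X \<omega>)"
        proof (cases "b \<ge> 1")
          case True
          then have "X \<omega> \<le> b * X \<omega>" using elim by (simp add: mult_le_cancel_right1)
          moreover have "1 \<le> B" by (simp add: B_def)
          moreover have "0 \<le> 1 + b * X \<omega>" using elim b by simp
          ultimately show ?thesis by (smt (verit) mult_le_cancel_right1 mult.commute)
        next
          case False
          then have "B = 1/b" using b by (simp add: B_def)
          then have "B * (1 + b * X \<omega>) = 1/b + X \<omega>" using b by (simp add: field_simps)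
          moreover have "1 \<le> 1/b" using False b by simp
          ultimately show ?thesis by simp
        qed
        then show ?case using elim b th by (auto intro!: powr_bound simp: B_def)
      qed
    qed simp
    then show "\<exists>\<theta>>0. integrable M (\<lambda>\<omega>. (1 + X \<omega>) powr \<theta>)" using th by blast
  next
    assume "\<exists>\<theta>>0. integrable M (\<lambda>\<omega>. (1 + X \<omega>) powr \<theta>)"
    then obtain th where th: "th > 0" and I: "integrable M (\<lambda>\<omega>. (1 + X \<omega>) powr th)" by blast
    define B where "B = max 1 b"
    have gm: "(\<lambda>\<omega>. (1 + b * X \<omega>) powr th) \<in> borel_measurable M" by measurable
    have "integrable M (\<lambda>\<omega>. (1 + b * X \<omega>) powr th)"
    proof (rule dom[OF I gm])
      show "AE \<omega> in M. 0 \<le> (1 + b * X \<omega>) powr th \<and> (1 + b * X \<omega>) powr th \<le> B powr th * (1 + X \<omega>) powr th"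
        using X0
      proof eventually_elim
        case (elim \<omega>)
        have "b * X \<omega> \<le> B * X \<omega>" using elim by (intro mult_right_mono) (auto simp: B_def)
        moreover have "1 \<le> B" by (simp add: B_def)
        ultimately have "1 + b * X \<omega> \<le> B * (1 + X \<omega>)" by (simp add: algebra_simps)
        then show ?case using elim b th by (auto intro!: powr_bound simp: B_def add_nonneg_nonneg)
      qed
    qed simp
    then show "\<exists>\<theta>>0. integrable M (\<lambda>\<omega>. (1 + b * X \<omega>) powr \<theta>)" using th by blast
  qed
  have C: "(\<exists>\<theta>>0. integrable M (\<lambda>\<omega>. (1 + X \<omega>) powr \<theta>))
          \<longleftrightarrow> (\<exists>\<theta>>0. integrable M (\<lambda>\<omega>. X \<omega> powr \<theta>))"
  proof
    assume "\<exists>\<theta>>0. integrable M (\<lambda>\<omega>. (1 + X \<omega>) powr \<theta>)"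
    then obtain th where th: "th > 0" and I: "integrable M (\<lambda>\<omega>. (1 + X \<omega>) powr th)" by blast
    have gm: "(\<lambda>\<omega>. X \<omega> powr th) \<in> borel_measurable M" by measurable
    have "integrable M (\<lambda>\<omega>. X \<omega> powr th)"
    proof (rule dom[OF I gm])
      show "AE \<omega> in M. 0 \<le> X \<omega> powr th \<and> X \<omega> powr th \<le> 1 * (1 + X \<omega>) powr th"
        using X0 by eventually_elim (use th in \<open>auto intro!: powr_mono2\<close>)
    qed simp
    then show "\<exists>\<theta>>0. integrable M (\<lambda>\<omega>. X \<omega> powr \<theta>)" using th by blast
  next
    assume "\<exists>\<theta>>0. integrable M (\<lambda>\<omega>. X \<omega> powr \<theta>)"
    then obtain th where th: "th > 0" and I: "integrable M (\<lambda>\<omega>. X \<omega> powr th)" by blast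
    have I2: "integrable M (\<lambda>\<omega>. 1 + X \<omega> powr th)" using I by simp
    have gm: "(\<lambda>\<omega>. (1 + X \<omega>) powr th) \<in> borel_measurable M" by measurable
    have "integrable M (\<lambda>\<omega>. (1 + X \<omega>) powr th)"
    proof (rule dom[OF I2 gm])
      show "AE \<omega> in M. 0 \<le> (1 + X \<omega>) powr th \<and> (1 + X \<omega>) powr th \<le> 2 powr th * (1 + X \<omega> powr th)"
        using X0
      proof eventually_elim
        case (elim \<omega>)
        have "(1 + X \<omega>) powr th \<le> 2 powr th * (1 + X \<omega> powr th)"
        proof (cases "X \<omega> \<le> 1")
          case True
          then have "(1 + X \<omega>) powr th \<le> 2 powr th" using elim th by (intro powr_mono2) auto
          moreover have "2 powr th \<le> 2 powr th * (1 + X \<omega> powr th)" by simp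
          ultimately show ?thesis by linarith
        next
          case False
          then have "(1 + X \<omega>) powr th \<le> 2 powr th * X \<omega> powr th"
            using elim th by (intro powr_bound) auto
          moreover have "2 powr th * X \<omega> powr th \<le> 2 powr th * (1 + X \<omega> powr th)" by simp
          ultimately show ?thesis by linarith
        qed
        then show ?case by simp
      qed
    qed simp
    then show "\<exists>\<theta>>0. integrable M (\<lambda>\<omega>. (1 + X \<omega>) powr \<theta>)" using th by blast
  qed
  show ?thesis using A Bb C by blast
qed

lemma part3:
  fixes p l :: "'a \<Rightarrow> real"
  assumes ind: "indep_var borel p borel l"
  shows "(\<forall>\<theta>>0. (\<integral>\<^sup>+\<omega>. ennreal ((p \<omega> * l \<omega>) powr \<theta>) \<partial>M)
              = (\<integral>\<^sup>+\<omega>. ennreal (p \<omega> powr \<theta>) \<partial>M) * (\<integral>\<^sup>+\<omega>. ennreal (l \<omega> powr \<theta>) \<partial>M))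
       \<and> (integrable M p \<and> integrable M l \<longrightarrow>
            (\<exists>\<theta>>0. integrable M (\<lambda>\<omega>. (p \<omega> * l \<omega>) powr \<theta>)))"
proof -
  have rv: "\<forall>i. random_variable (case_bool borel borel i) (case_bool p l i)"
    using ind unfolding indep_var_def indep_vars_def by blast
  have pm[measurable]: "p \<in> borel_measurable M" using rv[rule_format, of True] by simp
  have lm[measurable]: "l \<in> borel_measurable M" using rv[rule_format, of False] by simp
  have eq: "(\<integral>\<^sup>+\<omega>. ennreal ((p \<omega> * l \<omega>) powr th) \<partial>M)
              = (\<integral>\<^sup>+\<omega>. ennreal (p \<omega> powr th) \<partial>M) * (\<integral>\<^sup>+\<omega>. ennreal (l \<omega> powr th) \<partial>M)" for th
  proof -
    define q where "q = (\<lambda>x::real. ennreal (x powr th))"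
    have qm: "q \<in> borel_measurable borel" unfolding q_def by measurable
    have ind1: "indep_var borel (q \<circ> p) borel (q \<circ> l)"
      by (rule indep_var_compose[OF ind qm qm])
    have cb: "case_bool borel borel = (\<lambda>_::bool. (borel :: ennreal measure))"
      by (rule ext) (simp split: bool.split)
    have ind2: "indep_vars (\<lambda>_. borel) (case_bool (q \<circ> p) (q \<circ> l)) UNIV"
      using ind1 unfolding indep_var_def cb .
    have "(\<integral>\<^sup>+\<omega>. (\<Prod>i\<in>UNIV. case_bool (q \<circ> p) (q \<circ> l) i \<omega>) \<partial>M)
        = (\<Prod>i\<in>UNIV. \<integral>\<^sup>+\<omega>. case_bool (q \<circ> p) (q \<circ> l) i \<omega> \<partial>M)"
      by (rule indep_vars_nn_integral[OF _ ind2]) simp_all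
    then have "(\<integral>\<^sup>+\<omega>. q (l \<omega>) * q (p \<omega>) \<partial>M)
        = (\<integral>\<^sup>+\<omega>. q (l \<omega>) \<partial>M) * (\<integral>\<^sup>+\<omega>. q (p \<omega>) \<partial>M)"
      by (simp add: UNIV_bool comp_def)
    moreover have "(\<integral>\<^sup>+\<omega>. ennreal ((p \<omega> * l \<omega>) powr th) \<partial>M) = (\<integral>\<^sup>+\<omega>. q (l \<omega>) * q (p \<omega>) \<partial>M)"
      by (intro nn_integral_cong) (simp add: q_def powr_mult ennreal_mult mult.commute)
    ultimately show ?thesis unfolding q_def by (simp add: mult.commute)
  qed
  have int: "\<exists>\<theta>>0. integrable M (\<lambda>\<omega>. (p \<omega> * l \<omega>) powr \<theta>)"
    if ip: "integrable M p" and il: "integrable M l"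
  proof -
    have fp: "(\<integral>\<^sup>+\<omega>. ennreal (p \<omega> powr 1) \<partial>M) < \<infinity>"
      using ip unfolding integrable_iff_bounded by simp
    have fl: "(\<integral>\<^sup>+\<omega>. ennreal (l \<omega> powr 1) \<partial>M) < \<infinity>"
      using il unfolding integrable_iff_bounded by simp
    have "(\<integral>\<^sup>+\<omega>. ennreal (norm ((p \<omega> * l \<omega>) powr 1)) \<partial>M) < \<infinity>"
      using eq[of 1] fp fl by (simp add: ennreal_mult_less_top del: powr_one')
    then have "integrable M (\<lambda>\<omega>. (p \<omega> * l \<omega>) powr 1)"
      unfolding integrable_iff_bounded by (simp del: powr_one') measurable
    then show ?thesis by (intro exI[of _ 1]) simp
  qed
  show ?thesis using eq int by blast
qed

end

theorem lemma2:
  fixes M :: "'a measure"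
    and H :: "'a \<Rightarrow> complex^'nt^'nr"
    and p :: "'a \<Rightarrow> real"
    and a b :: real
  assumes "prob_space M"
    and "H \<in> borel_measurable M"
    and "p \<in> borel_measurable M"
    and "AE \<omega> in M. p \<omega> \<ge> 0"
    and "a > 0" and "b > 0"
  defines "lam \<equiv> (\<lambda>\<omega>. lambda_max (H \<omega>))"
    and "c \<equiv> (\<lambda>\<omega>. a * log 2 (1 + b * p \<omega> * lambda_max (H \<omega>)))"
  shows
    "(((\<exists>\<theta>>0. tail M c \<in> O(\<lambda>x. exp (- \<theta> * x)))
        \<longleftrightarrow> (\<exists>\<theta>>0. tail M (\<lambda>\<omega>. p \<omega> * lam \<omega>) \<in> O(\<lambda>x. x powr (- \<theta>))))
     \<and> ((\<exists>\<theta>>0. tail M (\<lambda>\<omega>. p \<omega> * lam \<omega>) \<in> O(\<lambda>x. x powr (- \<theta>)))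
        \<longleftrightarrow> (\<exists>\<theta>>0. tail M (\<lambda>\<omega>. p \<omega> * Re (mat_trace (H \<omega> ** conj_transpose (H \<omega>))))
                        \<in> O(\<lambda>x. x powr (- \<theta>)))))
   \<and> ( ((\<exists>\<theta>>0. integrable M (\<lambda>\<omega>. (1 + b * p \<omega> * lam \<omega>) powr \<theta>))
        \<longleftrightarrow> (\<exists>\<theta>>0. integrable M (\<lambda>\<omega>. exp (\<theta> * c \<omega>))))
     \<and> ((\<exists>\<theta>>0. integrable M (\<lambda>\<omega>. (1 + b * p \<omega> * lam \<omega>) powr \<theta>))
        \<longleftrightarrow> (\<exists>\<theta>>0. integrable M (\<lambda>\<omega>. (1 + p \<omega> * lam \<omega>) powr \<theta>)))
     \<and> ((\<exists>\<theta>>0. integrable M (\<lambda>\<omega>. (1 + p \<omega> * lam \<omega>) powr \<theta>))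
        \<longleftrightarrow> (\<exists>\<theta>>0. integrable M (\<lambda>\<omega>. (p \<omega> * lam \<omega>) powr \<theta>))))
   \<and> (prob_space.indep_var M borel p borel lam \<longrightarrow>
       (\<forall>\<theta>>0. (\<integral>\<^sup>+\<omega>. ennreal ((p \<omega> * lam \<omega>) powr \<theta>) \<partial>M)
              = (\<integral>\<^sup>+\<omega>. ennreal (p \<omega> powr \<theta>) \<partial>M) * (\<integral>\<^sup>+\<omega>. ennreal (lam \<omega> powr \<theta>) \<partial>M))
       \<and> (integrable M p \<and> integrable M lam \<longrightarrow>
            (\<exists>\<theta>>0. integrable M (\<lambda>\<omega>. (p \<omega> * lam \<omega>) powr \<theta>))))"
  proof -
  interpret P: prob_space M by (rule assms(1))
  note Hm[measurable] = assms(2) and pm[measurable] = assms(3)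
  have lamm[measurable]: "lam \<in> borel_measurable M"
    unfolding lam_def by (rule measurable_compose[OF assms(2) lam_borel])
  define X where "X = (\<lambda>\<omega>. p \<omega> * lam \<omega>)"
  define T where "T = (\<lambda>\<omega>. p \<omega> * Re (mat_trace (H \<omega> ** conj_transpose (H \<omega>))))"
  have Xm: "X \<in> borel_measurable M" unfolding X_def by measurable
  have Teq: "T = (\<lambda>\<omega>. p \<omega> * (norm (H \<omega>))^2)" unfolding T_def by (simp add: trace_norm)
  have Tm: "T \<in> borel_measurable M" unfolding Teq by measurable
  have X0: "AE \<omega> in M. 0 \<le> X \<omega>"
    using assms(4) by eventually_elim (simp add: X_def lam_def lam_nonneg)
  define K where "K = (real CARD('nt) * real CARD('nr))^2"
  have K: "K > 0" by (simp add: K_def)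
  have N: "real CARD('nr) > 0" by simp
  have le1: "AE \<omega> in M. X \<omega> \<le> K * T \<omega>"
    using assms(4)
  proof eventually_elim
    case (elim \<omega>)
    have "p \<omega> * lam \<omega> \<le> p \<omega> * (K * (norm (H \<omega>))^2)"
      unfolding lam_def K_def using elim by (intro mult_left_mono lam_le_trace)
    then show ?case by (simp add: X_def Teq algebra_simps)
  qed
  have le2: "AE \<omega> in M. T \<omega> \<le> real CARD('nr) * X \<omega>"
    using assms(4)
  proof eventually_elim
    case (elim \<omega>)
    have "p \<omega> * (norm (H \<omega>))^2 \<le> p \<omega> * (real CARD('nr) * lam \<omega>)"
      unfolding lam_def using elim by (intro mult_left_mono trace_le_lam)
    then show ?case by (simp add: X_def Teq algebra_simps)
  qed
  note R1 = P.part1[OF Xm X0 assms(5,6) Tm K N le1 le2]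
  note R2 = P.part2[OF Xm X0 assms(5,6)]
  have R3: "prob_space.indep_var M borel p borel lam \<longrightarrow>
       (\<forall>\<theta>>0. (\<integral>\<^sup>+\<omega>. ennreal ((p \<omega> * lam \<omega>) powr \<theta>) \<partial>M)
              = (\<integral>\<^sup>+\<omega>. ennreal (p \<omega> powr \<theta>) \<partial>M) * (\<integral>\<^sup>+\<omega>. ennreal (lam \<omega> powr \<theta>) \<partial>M))
       \<and> (integrable M p \<and> integrable M lam \<longrightarrow>
            (\<exists>\<theta>>0. integrable M (\<lambda>\<omega>. (p \<omega> * lam \<omega>) powr \<theta>)))"
    using P.part3 by blast
  have r1: "\<And>\<omega>. lambda_max (H \<omega>) = lam \<omega>" by (simp add: lam_def)
  have r2: "\<And>\<omega>. b * p \<omega> * lam \<omega> = b * X \<omega>" by (simp add: X_def)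
  have r3: "\<And>\<omega>. p \<omega> * lam \<omega> = X \<omega>" by (simp add: X_def)
  have r4: "\<And>\<omega>. p \<omega> * Re (mat_trace (H \<omega> ** conj_transpose (H \<omega>))) = T \<omega>" by (simp add: T_def)
  note R3' = R3[unfolded r3]
  show ?thesis
    unfolding c_def
    apply (simp only: r1 r2 r3 r4)
    using R1 R2 R3' by blast
qed

end
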